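(* Let $n\ge2$ be even, let $Q(x)=\sum_{i=1}^{n/2-1}Tr_1^n(x^{2^i+1})+Tr_1^{n/2}(x^{2^{n/2}+1})$ on $\mathbb{F}_{2^n}$, and let $f:\mathbb{F}_{2^n}\to\mathbb{F}_2$. Then $f$ is bent-negabent if and only if both $f$ and $f+Q$ are bent.
   Context: $Tr_1^m(z)=z+z^2+\dots+z^{2^{m-1}}$; $Tr=Tr_1^n$. Fix a self-dual basis $\{\alpha_i\}$ of $\mathbb{F}_{2^n}$ over $\mathbb{F}_2$ ($Tr(\alpha_i\alpha_j)=\delta_{ij}$), identify $\mathbb{F}_{2^n}$ with $\mathbb{F}_2^n$ via coordinates, and let $wt(x)$ be the number of nonzero coordinates. For $g:\mathbb{F}_{2^n}\to\mathbb{F}_2$: $g$ is bent if $\left|\sum_x(-1)^{g(x)+Tr(\mu x)}\right|=2^{n/2}$ for all $\mu$; negabent if $\left|\sum_x(-1)^{g(x)+Tr(\mu x)}\mathrm{i}^{wt(x)}\right|=2^{n/2}$ for all $\mu$ ($\mathrm{i}=\sqrt{-1}$); bent-negabent if both. *)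

theory Defs
  imports Complex_Main
begin

definition tr :: "nat \<Rightarrow> 'a::field \<Rightarrow> 'a" where
  "tr m z = (\<Sum>i<m. z ^ (2 ^ i))"

text \<open>Boolean functions take values in F_2 = {0,1}, a subfield of the field 'a.
  sgn2 y = (-1)^y for y in F_2.\<close>
definition sgn2 :: "'a::field \<Rightarrow> complex" where
  "sgn2 y = (if y = 0 then 1 else -1)"

text \<open>Hamming weight of x: number of nonzero coordinates of x w.r.t. the basis
  alpha_0,...,alpha_(n-1); the support S is the unique subset with x = sum of alpha_i, i in S.\<close>
definition wt :: "(nat \<Rightarrow> 'a::field) \<Rightarrow> nat \<Rightarrow> 'a \<Rightarrow> nat" where
  "wt alpha n x = card (THE S. S \<subseteq> {..<n} \<and> x = (\<Sum>i\<in>S. alpha i))"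

definition self_dual_basis :: "nat \<Rightarrow> (nat \<Rightarrow> 'a::{field,finite}) \<Rightarrow> bool" where
  "self_dual_basis n alpha \<longleftrightarrow>
     bij_betw (\<lambda>S. \<Sum>i\<in>S. alpha i) (Pow {..<n}) (UNIV :: 'a set) \<and>
     (\<forall>i<n. \<forall>j<n. tr n (alpha i * alpha j) = (if i = j then 1 else 0))"

definition bent :: "nat \<Rightarrow> ('a::{field,finite} \<Rightarrow> 'a) \<Rightarrow> bool" where
  "bent n g \<longleftrightarrow> (\<forall>\<mu>::'a.
     cmod (\<Sum>x\<in>UNIV. sgn2 (g x + tr n (\<mu> * x))) = sqrt (2 ^ n))"

definition negabent :: "nat \<Rightarrow> (nat \<Rightarrow> 'a::{field,finite}) \<Rightarrow> ('a \<Rightarrow> 'a) \<Rightarrow> bool" where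
  "negabent n alpha g \<longleftrightarrow> (\<forall>\<mu>::'a.
     cmod (\<Sum>x\<in>UNIV. sgn2 (g x + tr n (\<mu> * x)) * \<i> ^ wt alpha n x) = sqrt (2 ^ n))"

definition bent_negabent :: "nat \<Rightarrow> (nat \<Rightarrow> 'a::{field,finite}) \<Rightarrow> ('a \<Rightarrow> 'a) \<Rightarrow> bool" where
  "bent_negabent n alpha g \<longleftrightarrow> bent n g \<and> negabent n alpha g"

definition Qfun :: "nat \<Rightarrow> 'a::field \<Rightarrow> 'a" where
  "Qfun n x = (\<Sum>i\<in>{1..<n div 2}. tr n (x ^ (2 ^ i + 1)))
              + tr (n div 2) (x ^ (2 ^ (n div 2) + 1))"

end

theory Submission
  imports Defs
begin

lemma sum_reflect_aux: "N = M + (M::nat) \<Longrightarrow> (\<Sum>i\<in>{1..<M}. h (N - i)) = (\<Sum>k\<in>{M+1..<N}. (h k::'b::comm_monoid_add))"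
  apply (rule sum.reindex_bij_witness[where i="\<lambda>k. N - k" and j="\<lambda>k. N - k"])
  apply auto
  done

lemma sum_split_aux: "N = M + (M::nat) \<Longrightarrow> M \<ge> 1 \<Longrightarrow>
  (\<Sum>k\<in>{1..<M}. h k) + h M + (\<Sum>k\<in>{M+1..<N}. h k) = (\<Sum>k\<in>{1..<N}. (h k::'b::comm_monoid_add))"
proof -
  assume a: "N = M + M" "M \<ge> 1"
  have "(\<Sum>k\<in>{1..<M}. h k) + h M = (\<Sum>k\<in>{1..<M+1}. h k)" using a by simp
  also have "\<dots> + (\<Sum>k\<in>{M+1..<N}. h k) = (\<Sum>k\<in>{1..<N}. h k)"
    using sum.atLeastLessThan_concat[of 1 "M+1" N h] a by simp
  finally show ?thesis .
qed

lemma two_sq: "(a::int)^2 + b^2 = 2^(2*k+1) \<Longrightarrow> a^2 = 2^(2*k)"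
proof (induction k arbitrary: a b)
  case 0
  then have e: "a^2 + b^2 = 2" by simp
  have "a^2 \<le> 2" "b^2 \<le> 2" using e by (smt (verit) zero_le_power2)+
  have lt: "\<bar>x\<bar> < 2" if "x^2 \<le> 2" for x :: int
  proof (rule ccontr)
    assume "\<not> \<bar>x\<bar> < 2"
    then have "2*2 \<le> \<bar>x\<bar> * \<bar>x\<bar>" by (intro mult_mono) auto
    then show False using that by (simp add: power2_eq_square abs_mult_self_eq)
  qed
  have "\<bar>a\<bar> < 2" "\<bar>b\<bar> < 2" using lt \<open>a^2 \<le> 2\<close> \<open>b^2 \<le> 2\<close> by auto
  then have "a \<in> {-1,0,1}" "b \<in> {-1,0,1}" by auto
  then show ?case using e by auto
next
  case (Suc k)
  have e: "a^2 + b^2 = 4 * 2^(2*k+1)" using Suc.prems by (simp add: power_add power_mult_distrib)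
  show ?case
  proof (cases "even a")
    case True
    then obtain c where c: "a = 2 * c" by blast
    have "b^2 = 2 * (2*2^(2*k+1) - 2*c^2)" using e c by (simp add: algebra_simps power2_eq_square)
    then have "even (b^2)" by simp
    then have "even b" by simp
    then obtain d where d: "b = 2 * d" by blast
    have "c^2 + d^2 = 2^(2*k+1)" using e c d by (simp add: power_mult_distrib)
    then have "c^2 = 2^(2*k)" by (rule Suc.IH)
    then show ?thesis using c by (simp add: power_mult_distrib power_add)
  next
    case False
    then obtain c where c: "a = 2 * c + 1" by (metis oddE)
    have "b^2 = 2 * (2*2^(2*k+1) - 2*c^2 - 2*c - 1) + 1" using e c by (simp add: algebra_simps power2_eq_square)
    then have "odd (b^2)" by simp
    then have "odd b" by simp
    then obtain d where d: "b = 2 * d + 1" by (metis oddE)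
    have "a^2 + b^2 = 4 * (c^2 + c + d^2 + d) + 2" using c d by (simp add: algebra_simps power2_eq_square)
    with e have "4 * (2^(2*k+1) - (c^2 + c + d^2 + d)) = 2" by (simp add: algebra_simps)
    then show ?thesis by presburger
  qed
qed

lemma cmod_comb: "(cmod ((1+\<i>)/2 * of_real a + (1-\<i>)/2 * of_real b))^2 = (a^2+b^2)/2"
proof -
  have "(1+\<i>)/2 * of_real a + (1-\<i>)/2 * of_real b = Complex ((a+b)/2) ((a-b)/2)"
    by (simp add: complex_eq_iff)
  then have "(cmod ((1+\<i>)/2 * of_real a + (1-\<i>)/2 * of_real b))^2 = ((a+b)/2)^2 + ((a-b)/2)^2"
    by (simp only: cmod_power2 complex.sel)
  then show ?thesis by (simp add: power2_eq_square field_simps)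
qed

lemma sqrt_iff: "(x::real) \<ge> 0 \<Longrightarrow> y \<ge> 0 \<Longrightarrow> x = sqrt y \<longleftrightarrow> x^2 = y"
  by (metis real_sqrt_pow2 real_sqrt_unique)

locale L =
  fixes n :: nat and alpha :: "nat \<Rightarrow> 'a::{field,finite}"
  assumes two: "(2::'a) = 0" and crd: "card (UNIV::'a set) = 2^n" and ev: "even n" and n2: "n \<ge> 2"
    and sdb: "self_dual_basis n alpha"
begin

lemma add_self[simp]: "x + x = (0::'a)"
  by (metis mult_2 two mult_zero_left)

lemma minus_self[simp]: "- x = (x::'a)"
  by (metis add_self add.inverse_unique)

lemma diff_add: "x - y = x + (y::'a)"
  by (metis diff_conv_add_uminus minus_self)

lemma pow2k_add: "(x + y) ^ (2 ^ k) = x ^ (2 ^ k) + (y::'a) ^ (2 ^ k)"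
proof (induction k)
  case 0 then show ?case by simp
next
  case (Suc k)
  have "(x + y) ^ (2 ^ Suc k) = ((x+y)^(2^k))^2" by (simp add: power_mult[symmetric] mult.commute)
  also have "\<dots> = (x^(2^k))^2 + (y^(2^k))^2 + 2 * x^(2^k) * y^(2^k)"
    unfolding Suc power2_sum by simp
  also have "\<dots> = x ^ (2 ^ Suc k) + y ^ (2 ^ Suc k)"
    by (simp add: two power_mult[symmetric] mult.commute)
  finally show ?case .
qed

lemma pow2k_sum: "(\<Sum>i\<in>A. f i) ^ (2 ^ k) = (\<Sum>i\<in>A. (f i :: 'a) ^ (2 ^ k))"
proof (cases "finite A")
  case True then show ?thesis by (induction A rule: finite_induct) (simp_all add: pow2k_add)
qed simp

lemma pow2k_mult: "(x * y) ^ (2 ^ k) = x ^ (2 ^ k) * (y::'a) ^ (2 ^ k)"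
  by (simp add: power_mult_distrib)

lemma fermat: "(x::'a) ^ (2 ^ n) = x"
proof (cases "x = 0")
  case True then show ?thesis by simp
next
  case False
  define G where "G = (UNIV::'a set) - {0}"
  have fin: "finite G" by simp
  have bij: "bij_betw (\<lambda>y. x * y) G G"
    by (rule bij_betw_byWitness[where f'="\<lambda>y. y / x"]) (auto simp: G_def False)
  have "prod (\<lambda>y. y) G = prod (\<lambda>y. x * y) G"
    using prod.reindex_bij_betw[OF bij, of "\<lambda>y. y"] by simp
  also have "\<dots> = x ^ card G * prod (\<lambda>y. y) G" by (simp add: prod.distrib)
  finally have "x ^ card G = 1"
    using fin by (simp add: G_def)
  moreover have "card G = 2^n - 1" unfolding G_def using crd by (simp add: card_Diff_subset)
  ultimately have "x ^ (2^n - 1) = 1" by simp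
  then have "x * x ^ (2^n - 1) = x" by simp
  moreover have "Suc (2^n - 1) = 2^n" by simp
  ultimately show ?thesis by (metis power_Suc)
qed


lemma tr_add: "tr m (x + y) = tr m x + tr m (y::'a)"
  by (simp add: tr_def pow2k_add sum.distrib)

lemma tr_zero[simp]: "tr m (0::'a) = 0"
  by (simp add: tr_def zero_power)

lemma tr_sum: "tr m (\<Sum>i\<in>A. f i) = (\<Sum>i\<in>A. tr m (f i :: 'a))"
proof (cases "finite A")
  case True then show ?thesis by (induction A rule: finite_induct) (simp_all add: tr_add)
qed simp

lemma tr_pow: "(tr m z) ^ (2^k) = tr m ((z::'a) ^ (2^k))"
  unfolding tr_def pow2k_sum by (simp add: power_mult[symmetric] mult.commute)

lemma tr_shift: "(\<Sum>i<m. (z::'a) ^ (2 ^ Suc i)) + z = tr m z + z ^ (2^m)"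
proof -
  have "(\<Sum>i<Suc m. z ^ (2 ^ i)) = z ^ (2^0) + (\<Sum>i<m. z ^ (2 ^ Suc i))"
    by (rule sum.lessThan_Suc_shift)
  moreover have "(\<Sum>i<Suc m. z ^ (2 ^ i)) = tr m z + z ^ (2^m)"
    by (simp add: tr_def)
  ultimately show ?thesis by (simp add: add.commute)
qed

lemma tr_sq: "tr m ((z::'a)^2) = tr m z + z + z ^ (2^m)"
proof -
  have "tr m (z^2) = (\<Sum>i<m. z ^ (2 ^ Suc i))"
    unfolding tr_def by (simp add: power_mult[symmetric] mult.commute)
  also have "\<dots> = ((\<Sum>i<m. z ^ (2 ^ Suc i)) + z) + z" by (simp add: add.assoc)
  also have "\<dots> = tr m z + z ^ (2^m) + z" using tr_shift[where m=m and z=z] by simp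
  finally show ?thesis by (simp add: algebra_simps)
qed

lemma F2_of_sq: "(t::'a) ^ 2 = t \<Longrightarrow> t = 0 \<or> t = 1"
  by (metis power2_eq_square mult_cancel_left2 mult_zero_right)

lemma tr_F2: "(z::'a) ^ (2^m) = z \<Longrightarrow> tr m z = 0 \<or> tr m z = 1"
  apply (rule F2_of_sq)
  using tr_pow[where m=m and z=z and k=1] tr_sq[where m=m and z=z] by (simp add: two)

lemma trn_F2: "tr n (z::'a) = 0 \<or> tr n z = 1"
  using tr_F2 fermat by blast

lemma trn_frob: "tr n ((z::'a) ^ (2^k)) = tr n z"
proof (induction k)
  case (Suc k)
  have "tr n (z ^ (2 ^ Suc k)) = tr n ((z ^ (2^k))^2)"
    by (simp add: power_mult[symmetric] mult.commute)
  also have "\<dots> = tr n (z ^ (2^k))" using tr_sq[where m=n and z="z^(2^k)"] fermat by (simp add: two)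
  finally show ?case using Suc by simp
qed simp

lemma F2_pow: "(c::'a) = 0 \<or> c = 1 \<Longrightarrow> c ^ k = c \<or> k = 0"
  by auto

lemma tr_scal: "(c::'a) = 0 \<or> c = 1 \<Longrightarrow> tr m (c * x) = c * tr m x"
  by (auto simp: tr_def zero_power)

lemma tr_double: "tr (m + m) (w::'a) = tr m w + tr m (w ^ (2^m))"
proof -
  have "tr (m+m) w = (\<Sum>i\<in>{0..<m+m}. w ^ (2^i))" by (simp add: tr_def lessThan_atLeast0)
  also have "\<dots> = (\<Sum>i\<in>{0..<m}. w ^ (2^i)) + (\<Sum>i\<in>{m..<m+m}. w ^ (2^i))"
    by (simp add: sum.atLeastLessThan_concat)
  also have "(\<Sum>i\<in>{m..<m+m}. w ^ (2^i)) = (\<Sum>i\<in>{0..<m}. w ^ (2^(i+m)))"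
    using sum.shift_bounds_nat_ivl[of "\<lambda>i. w^(2^i)" 0 m m] by simp
  also have "\<dots> = tr m (w ^ (2^m))"
    by (simp add: tr_def lessThan_atLeast0 power_mult[symmetric] power_add mult.commute)
  finally show ?thesis by (simp add: tr_def lessThan_atLeast0)
qed


definition F2 :: "'a \<Rightarrow> bool" where "F2 t \<longleftrightarrow> t = 0 \<or> t = 1"

lemma F2_add: "F2 a \<Longrightarrow> F2 b \<Longrightarrow> F2 (a + b)"
  by (auto simp: F2_def)

lemma F2_mult: "F2 a \<Longrightarrow> F2 b \<Longrightarrow> F2 (a * b)"
  by (auto simp: F2_def)

lemma F2_sum: "(\<And>i. i \<in> A \<Longrightarrow> F2 (f i)) \<Longrightarrow> F2 (\<Sum>i\<in>A. f i)"
proof (cases "finite A")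
  case True
  then show "(\<And>i. i \<in> A \<Longrightarrow> F2 (f i)) \<Longrightarrow> ?thesis"
    by (induction A rule: finite_induct) (auto simp: F2_add, simp add: F2_def)
qed (simp add: F2_def)

lemma F2_tr: "F2 (tr n x)"
  using trn_F2 F2_def by blast

definition m :: nat where "m = n div 2"

lemma nmm: "n = m + m" using ev unfolding m_def by presburger

lemma m1: "m \<ge> 1" using n2 by (simp add: m_def)

lemma F2_Q: "F2 (Qfun n x)"
proof -
  let ?z = "x ^ (2^m + 1)"
  have "?z ^ (2^m) = x ^ (2^m * 2^m) * x ^ (2^m)"
    by (simp add: power_mult[symmetric] power_add algebra_simps)
  also have "2^m * 2^m = (2::nat)^n" using nmm by (simp add: power_add[symmetric])
  finally have "?z ^ (2^m) = ?z" using fermat by (simp add: power_add)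
  then have "F2 (tr m ?z)" using tr_F2 F2_def by blast
  moreover have "F2 (\<Sum>i\<in>{1..<n div 2}. tr n (x ^ (2 ^ i + 1)))"
    by (rule F2_sum) (rule F2_tr)
  ultimately show ?thesis unfolding Qfun_def m_def by (simp add: F2_add)
qed

lemma pow_expand: "(x + y) ^ (2^i + 1) = x ^ (2^i + 1) + y ^ (2^i + 1) + (x^(2^i) * y + x * (y::'a)^(2^i))"
  by (simp add: power_add pow2k_add algebra_simps)

lemma step4: "i \<le> n \<Longrightarrow> tr n (x^(2^i) * y) = tr n (x * (y::'a)^(2^(n-i)))"
proof -
  assume "i \<le> n"
  then have "(2::nat)^i * 2^(n-i) = 2^n" by (simp add: power_add[symmetric])
  then have "(x^(2^i) * y) ^ (2^(n-i)) = x * y^(2^(n-i))"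
    by (simp add: power_mult_distrib power_mult[symmetric] fermat)
  then show ?thesis using trn_frob[where z="x^(2^i) * y" and k="n-i"] by simp
qed

lemma Q_polar: "Qfun n (x + y::'a) = Qfun n x + Qfun n y + tr n x * tr n y + tr n (x * y)"
proof -
  define h where "h k = tr n (x * y^(2^k))" for k
  have md: "n div 2 = m" by (simp add: m_def)
  have A: "Qfun n (x+y) = Qfun n x + Qfun n y +
     ((\<Sum>i\<in>{1..<m}. tr n (x^(2^i) * y) + h i) + (tr m (x^(2^m) * y) + tr m (x * y^(2^m))))"
  proof -
    have e: "tr k ((x+y)^(2^i+1)) = tr k (x^(2^i+1)) + tr k (y^(2^i+1)) + (tr k (x^(2^i)*y) + tr k (x*y^(2^i)))" for k i
      by (simp only: pow_expand tr_add)
    show ?thesis unfolding Qfun_def md e sum.distrib h_def by (simp add: algebra_simps)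
  qed
  have "(x * y^(2^m)) ^ (2^m) = x^(2^m) * y"
  proof -
    have "(2::nat)^m * 2^m = 2^n" using nmm by (simp add: power_add[symmetric])
    then show ?thesis by (simp add: power_mult_distrib power_mult[symmetric] fermat)
  qed
  then have B: "tr m (x^(2^m) * y) + tr m (x * y^(2^m)) = h m"
    using tr_double[where m=m and w="x * y^(2^m)"] nmm by (simp add: h_def add.commute)
  have C: "(\<Sum>i\<in>{1..<m}. tr n (x^(2^i) * y)) = (\<Sum>i\<in>{1..<m}. h (n - i))"
  proof (rule sum.cong)
    fix i assume "i \<in> {1..<m}"
    then have "i \<le> n" using nmm by simp
    then show "tr n (x^(2^i) * y) = h (n - i)" using step4 h_def by simp
  qed simp
  have D: "(\<Sum>i\<in>{1..<m}. h (n - i)) = (\<Sum>k\<in>{m+1..<n}. h k)"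
    by (rule sum_reflect_aux[OF nmm])
  have E: "(\<Sum>k\<in>{1..<m}. h k) + h m + (\<Sum>k\<in>{m+1..<n}. h k) = (\<Sum>k\<in>{1..<n}. h k)"
    by (rule sum_split_aux[OF nmm m1])
  have F: "(\<Sum>k\<in>{1..<n}. y^(2^k)) = tr n y + y"
  proof -
    have "tr n y = (\<Sum>k\<in>{0..<n}. y^(2^k))" by (simp add: tr_def lessThan_atLeast0)
    also have "\<dots> = y + (\<Sum>k\<in>{1..<n}. y^(2^k))"
      using n2 by (simp add: sum.atLeast_Suc_lessThan)
    finally show ?thesis by (simp add: algebra_simps two)
  qed
  have G: "(\<Sum>k\<in>{1..<n}. h k) = tr n x * tr n y + tr n (x * y)"
  proof -
    have "(\<Sum>k\<in>{1..<n}. h k) = tr n (x * (\<Sum>k\<in>{1..<n}. y^(2^k)))"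
      unfolding h_def by (simp add: sum_distrib_left tr_sum)
    also have "\<dots> = tr n (tr n y * x) + tr n (x * y)" unfolding F by (simp add: algebra_simps tr_add)
    also have "\<dots> = tr n x * tr n y + tr n (x * y)" using trn_F2[of y] by (simp add: tr_scal)
    finally show ?thesis .
  qed
  show ?thesis unfolding A B sum.distrib C D
    using E G by (simp add: algebra_simps)
qed


definition sb :: "nat set \<Rightarrow> 'a" where "sb S = (\<Sum>i\<in>S. alpha i)"

lemma bij_sb: "bij_betw sb (Pow {..<n}) UNIV"
  using sdb unfolding self_dual_basis_def sb_def by blast

lemma sd: "i < n \<Longrightarrow> j < n \<Longrightarrow> tr n (alpha i * alpha j) = (if i = j then 1 else 0)"
  using sdb unfolding self_dual_basis_def by blast

lemma surj_sb: "\<exists>S. S \<subseteq> {..<n} \<and> x = sb S"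
  using bij_sb unfolding bij_betw_def by (metis PowD UNIV_I imageE)

lemma wt_sb: "S \<subseteq> {..<n} \<Longrightarrow> wt alpha n (sb S) = card S"
proof -
  assume S: "S \<subseteq> {..<n}"
  have "(THE S'. S' \<subseteq> {..<n} \<and> sb S = (\<Sum>i\<in>S'. alpha i)) = S"
  proof (rule the_equality)
    show "S \<subseteq> {..<n} \<and> sb S = (\<Sum>i\<in>S. alpha i)" using S by (simp add: sb_def)
    fix S' assume "S' \<subseteq> {..<n} \<and> sb S = (\<Sum>i\<in>S'. alpha i)"
    then show "S' = S" using bij_sb S unfolding bij_betw_def inj_on_def sb_def by blast
  qed
  then show ?thesis unfolding wt_def by simp
qed

lemma sb_empty[simp]: "sb {} = 0" by (simp add: sb_def)

lemma of_nat_par: "(of_nat k :: 'a) = (if even k then 0 else 1)"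
  by (induction k) (auto simp: two)

lemma tr_alpha_sb: "j < n \<Longrightarrow> S \<subseteq> {..<n} \<Longrightarrow> tr n (alpha j * sb S) = (if j \<in> S then 1 else 0)"
proof -
  assume j: "j < n" and S: "S \<subseteq> {..<n}"
  have "tr n (alpha j * sb S) = (\<Sum>i\<in>S. tr n (alpha j * alpha i))"
    by (simp add: sb_def sum_distrib_left tr_sum)
  also have "\<dots> = (\<Sum>i\<in>S. if j = i then 1 else 0)"
    by (rule sum.cong) (use j S in \<open>auto simp: sd\<close>)
  finally show ?thesis using S by (simp add: finite_subset)
qed

lemma fin: "S \<subseteq> {..<n} \<Longrightarrow> finite S" by (rule finite_subset) auto

lemma tr_sb_sb: "A \<subseteq> {..<n} \<Longrightarrow> B \<subseteq> {..<n} \<Longrightarrow> tr n (sb A * sb B) = of_nat (card (A \<inter> B))"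
proof -
  assume A: "A \<subseteq> {..<n}" and B: "B \<subseteq> {..<n}"
  have "tr n (sb A * sb B) = (\<Sum>i\<in>A. tr n (alpha i * sb B))"
    by (simp add: sb_def sum_distrib_right tr_sum)
  also have "\<dots> = (\<Sum>i\<in>A. if i \<in> B then 1 else 0)"
    by (rule sum.cong) (use A B in \<open>auto simp: tr_alpha_sb\<close>)
  also have "\<dots> = (\<Sum>i\<in>A \<inter> B. 1)" using sum.inter_restrict[of A "\<lambda>_. (1::'a)" B] fin[OF A] by simp
  finally show ?thesis by simp
qed

lemma tr_alpha: "i < n \<Longrightarrow> tr n (alpha i) = 1"
proof -
  assume i: "i < n"
  have "tr n (alpha i) = tr n ((alpha i)^2)" using tr_sq[where m=n and z="alpha i"] fermat by (simp add: two)
  also have "\<dots> = 1" using sd[OF i i] by (simp add: power2_eq_square)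
  finally show ?thesis .
qed

lemma tr_sb: "A \<subseteq> {..<n} \<Longrightarrow> tr n (sb A) = of_nat (card A)"
proof -
  assume A: "A \<subseteq> {..<n}"
  have "tr n (sb A) = (\<Sum>i\<in>A. tr n (alpha i))" by (simp add: sb_def tr_sum)
  also have "\<dots> = (\<Sum>i\<in>A. 1)" by (rule sum.cong) (use A in \<open>auto simp: tr_alpha\<close>)
  finally show ?thesis by simp
qed

lemma sb_add: "A \<subseteq> {..<n} \<Longrightarrow> B \<subseteq> {..<n} \<Longrightarrow> sb A + sb B = sb ((A - B) \<union> (B - A))"
proof -
  assume A: "A \<subseteq> {..<n}" and B: "B \<subseteq> {..<n}"
  have fA: "finite A" and fB: "finite B" using fin A B by auto
  have "sb A = sb (A - B) + sb (A \<inter> B)"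
  proof -
    have "sum alpha A = sum alpha ((A - B) \<union> (A \<inter> B))" by (rule arg_cong[where f="sum alpha"]) blast
    also have "\<dots> = sum alpha (A - B) + sum alpha (A \<inter> B)" by (rule sum.union_disjoint) (use fA in auto)
    finally show ?thesis unfolding sb_def by (simp add: sum.reindex)
  qed
  moreover have "sb B = sb (B - A) + sb (A \<inter> B)"
  proof -
    have "sum alpha B = sum alpha ((B - A) \<union> (A \<inter> B))" by (rule arg_cong[where f="sum alpha"]) blast
    also have "\<dots> = sum alpha (B - A) + sum alpha (A \<inter> B)" by (rule sum.union_disjoint) (use fB in auto)
    finally show ?thesis unfolding sb_def by (simp add: sum.reindex)
  qed
  moreover have "sb ((A - B) \<union> (B - A)) = sb (A - B) + sb (B - A)"
    unfolding sb_def using fA fB by (simp add: sum.union_disjoint Diff_Int_distrib2 Int_Diff inf_commute)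
  ultimately show ?thesis by (simp add: algebra_simps)
qed

lemma card_sym: "finite A \<Longrightarrow> finite B \<Longrightarrow> card ((A - B) \<union> (B - A)) + 2 * card (A \<inter> B) = card A + card B"
proof -
  assume fA: "finite A" and fB: "finite B"
  have "card ((A - B) \<union> (B - A)) = card (A - B) + card (B - A)"
    using fA fB by (subst card_Un_disjoint) auto
  moreover have "card A = card (A - B) + card (A \<inter> B)"
  proof -
    have "card A = card ((A - B) \<union> (A \<inter> B))" by (rule arg_cong[where f="card"]) blast
    also have "\<dots> = card (A - B) + card (A \<inter> B)" by (rule card_Un_disjoint) (use fA in auto)
    finally show ?thesis .
  qed
  moreover have "card B = card (B - A) + card (A \<inter> B)"
  proof -
    have "card B = card ((B - A) \<union> (A \<inter> B))" by (rule arg_cong[where f="card"]) blast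
    also have "\<dots> = card (B - A) + card (A \<inter> B)" by (rule card_Un_disjoint) (use fB in auto)
    finally show ?thesis .
  qed
  ultimately show ?thesis by simp
qed


lemma sgn2_add: "F2 a \<Longrightarrow> F2 b \<Longrightarrow> sgn2 (a + b) = sgn2 a * sgn2 b"
  by (auto simp: F2_def sgn2_def)

lemma sgn2_sq[simp]: "sgn2 a * sgn2 a = 1"
  by (simp add: sgn2_def)

lemma sgn2_of_nat: "sgn2 (of_nat k :: 'a) = (-1) ^ k"
  by (simp add: sgn2_def of_nat_par)

definition om :: "'a \<Rightarrow> complex" where "om x = \<i> ^ wt alpha n x"

lemma om_add: "om (x + y) = om x * om y * sgn2 (tr n (x * y))"
proof -
  obtain A where A: "A \<subseteq> {..<n}" "x = sb A" using surj_sb by blast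
  obtain B where B: "B \<subseteq> {..<n}" "y = sb B" using surj_sb by blast
  have fA: "finite A" and fB: "finite B" using fin A B by auto
  define D where "D = (A - B) \<union> (B - A)"
  have D: "D \<subseteq> {..<n}" "x + y = sb D" using A B sb_add by (auto simp: D_def)
  define c where "c = card (A \<inter> B)"
  have cs: "card D + 2 * c = card A + card B" using card_sym[OF fA fB] by (simp add: D_def c_def)
  have "om x * om y = \<i> ^ (card D + 2 * c)"
    using A B cs by (simp add: om_def wt_sb power_add)
  also have "\<dots> = om (x + y) * (-1) ^ c"
    using D by (simp add: om_def wt_sb power_add power_mult)
  finally have e: "om x * om y = om (x + y) * (-1) ^ c" .
  have t: "sgn2 (tr n (x * y)) = (-1) ^ c"
    using A B by (simp add: tr_sb_sb sgn2_of_nat c_def)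
  have "om x * om y * sgn2 (tr n (x * y)) = om (x + y) * ((-1) ^ c * (-1) ^ c)"
    unfolding e t by (simp add: ac_simps)
  also have "\<dots> = om (x + y)" by (simp add: power_add[symmetric])
  finally show ?thesis by simp
qed

definition cinv :: "'a \<Rightarrow> complex" where "cinv t = (if t = 0 then 1 else - \<i>)"

lemma cinv_add: "F2 a \<Longrightarrow> F2 b \<Longrightarrow> cinv (a + b) = cinv a * cinv b * sgn2 (a * b)"
  by (auto simp: F2_def cinv_def sgn2_def)

definition phi :: "'a \<Rightarrow> complex" where "phi x = om x * sgn2 (Qfun n x) * cinv (tr n x)"

lemma phi_add: "phi (x + y) = phi x * phi y"
proof -
  define a where "a = sgn2 (tr n (x * y))"
  define b where "b = sgn2 (tr n x * tr n y)"
  have Q: "sgn2 (Qfun n (x + y)) = sgn2 (Qfun n x) * sgn2 (Qfun n y) * b * a"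
    unfolding Q_polar a_def b_def
    by (simp add: sgn2_add F2_add F2_mult F2_Q F2_tr)
  have C: "cinv (tr n (x + y)) = cinv (tr n x) * cinv (tr n y) * b"
    unfolding tr_add b_def by (rule cinv_add) (simp_all add: F2_tr)
  have "phi (x + y) = phi x * phi y * (a * a) * (b * b)"
    unfolding phi_def om_add Q C a_def[symmetric] by (simp add: ac_simps)
  then show ?thesis by (simp add: a_def b_def)
qed

lemma wt0: "wt alpha n 0 = 0"
  using wt_sb[of "{}"] by simp

lemma Q0: "Qfun n (0::'a) = 0"
  by (simp add: Qfun_def zero_power)

lemma phi0: "phi 0 = 1"
  by (simp add: phi_def om_def wt0 Q0 sgn2_def cinv_def)

lemma phi_pm: "phi x = 1 \<or> phi x = -1"
proof -
  have "phi x * phi x = 1" using phi_add[of x x] phi0 by simp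
  then show ?thesis using square_eq_1_iff by blast
qed

lemma sb_insert: "i \<notin> S \<Longrightarrow> finite S \<Longrightarrow> sb (insert i S) = alpha i + sb S"
  by (simp add: sb_def)

lemma phi_sb: "S \<subseteq> {..<n} \<Longrightarrow> phi (sb S) = (\<Prod>i\<in>S. phi (alpha i))"
proof -
  assume "S \<subseteq> {..<n}"
  then have "finite S" by (rule fin)
  then show ?thesis by (induction S rule: finite_induct) (simp_all add: phi0 sb_insert phi_add)
qed

definition T :: "nat set" where "T = {j. j < n \<and> phi (alpha j) = -1}"
definition lam :: 'a where "lam = sb T"

lemma phi_tr: "phi x = sgn2 (tr n (lam * x))"
proof -
  obtain S where S: "S \<subseteq> {..<n}" "x = sb S" using surj_sb by blast
  have T: "T \<subseteq> {..<n}" by (auto simp: T_def)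
  have fS: "finite S" using fin S by auto
  have "phi x = (\<Prod>i\<in>S. if i \<in> T then -1 else 1)"
    unfolding S(2) phi_sb[OF S(1)]
    by (rule prod.cong) (use S phi_pm in \<open>auto simp: T_def\<close>)
  also have "\<dots> = (\<Prod>i\<in>S \<inter> T. -1)"
    using prod.inter_restrict[of S "\<lambda>_. (-1::complex)" T] fS by simp
  also have "\<dots> = (-1) ^ card (T \<inter> S)" by (simp add: Int_commute)
  also have "\<dots> = sgn2 (tr n (lam * x))"
    using S T by (simp add: lam_def tr_sb_sb sgn2_of_nat)
  finally show ?thesis .
qed

definition cc :: "'a \<Rightarrow> complex" where "cc t = (if t = 0 then 1 else \<i>)"

lemma om_formula: "om x = sgn2 (tr n (lam * x)) * sgn2 (Qfun n x) * cc (tr n x)"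
proof -
  have "sgn2 (tr n (lam * x)) * sgn2 (Qfun n x) * cc (tr n x)
      = om x * (sgn2 (Qfun n x) * sgn2 (Qfun n x)) * (cinv (tr n x) * cc (tr n x))"
    unfolding phi_tr[symmetric] phi_def by (simp add: ac_simps)
  also have "\<dots> = om x" by (simp add: cinv_def cc_def)
  finally show ?thesis by simp
qed


definition W :: "('a \<Rightarrow> 'a) \<Rightarrow> 'a \<Rightarrow> int" where
  "W g v = (\<Sum>x\<in>UNIV. if g x + tr n (v * x) = 0 then 1 else -1)"

lemma sum_sgn: "(\<Sum>x\<in>UNIV. sgn2 (g x + tr n (v * x))) = complex_of_int (W g v)"
  unfolding W_def of_int_sum by (rule sum.cong) (auto simp: sgn2_def)

lemma bent_W: "bent n g \<longleftrightarrow> (\<forall>v. (W g v)^2 = 2^n)"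
proof -
  have "cmod (complex_of_int w) = sqrt (2^n) \<longleftrightarrow> w^2 = 2^n" for w :: int
  proof -
    have "cmod (complex_of_int w) = \<bar>real_of_int w\<bar>" by (metis norm_of_int)
    then have "cmod (complex_of_int w) = sqrt (2^n) \<longleftrightarrow> (real_of_int w)^2 = 2^n"
      using sqrt_iff[of "\<bar>real_of_int w\<bar>" "2^n"] by simp
    also have "\<dots> \<longleftrightarrow> w^2 = 2^n" by (metis of_int_eq_iff of_int_numeral of_int_power)
    finally show ?thesis .
  qed
  then show ?thesis unfolding bent_def sum_sgn by simp
qed

lemma cc_F2: "F2 t \<Longrightarrow> cc t = (1+\<i>)/2 + (1-\<i>)/2 * sgn2 t"
  by (auto simp: F2_def cc_def sgn2_def field_simps)

lemma term_eq:
  assumes f: "F2 (f x)"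
  shows "sgn2 (f x + tr n (u * x)) * \<i> ^ wt alpha n x =
    (1+\<i>)/2 * sgn2 (f x + Qfun n x + tr n ((u + lam) * x)) +
    (1-\<i>)/2 * sgn2 (f x + Qfun n x + tr n ((u + lam + 1) * x))"
proof -
  define s where "s = sgn2 (f x + Qfun n x + tr n ((u + lam) * x))"
  have s1: "s = sgn2 (f x + tr n (u * x)) * sgn2 (tr n (lam * x)) * sgn2 (Qfun n x)"
    unfolding s_def distrib_right tr_add
    by (simp add: sgn2_add F2_add f F2_tr F2_Q ac_simps)
  have s2: "sgn2 (f x + Qfun n x + tr n ((u + lam + 1) * x)) = s * sgn2 (tr n x)"
    unfolding s_def distrib_right[of "u+lam" 1] tr_add
    by (simp add: sgn2_add F2_add f F2_tr F2_Q ac_simps)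
  have "sgn2 (f x + tr n (u * x)) * \<i> ^ wt alpha n x = s * cc (tr n x)"
    unfolding om_def[symmetric] om_formula s1 by (simp add: ac_simps)
  also have "\<dots> = (1+\<i>)/2 * s + (1-\<i>)/2 * (s * sgn2 (tr n x))"
    by (simp add: cc_F2 F2_tr algebra_simps)
  finally show ?thesis unfolding s2 s_def by simp
qed

lemma nega_sum:
  assumes f: "\<forall>x. F2 (f x)"
  shows "(\<Sum>x\<in>UNIV. sgn2 (f x + tr n (u * x)) * \<i> ^ wt alpha n x) =
    (1+\<i>)/2 * of_real (of_int (W (\<lambda>x. f x + Qfun n x) (u + lam))) +
    (1-\<i>)/2 * of_real (of_int (W (\<lambda>x. f x + Qfun n x) (u + lam + 1)))"
proof -
  have "(\<Sum>x\<in>UNIV. sgn2 (f x + tr n (u * x)) * \<i> ^ wt alpha n x) =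
    (1+\<i>)/2 * (\<Sum>x\<in>UNIV. sgn2 (f x + Qfun n x + tr n ((u + lam) * x))) +
    (1-\<i>)/2 * (\<Sum>x\<in>UNIV. sgn2 (f x + Qfun n x + tr n ((u + lam + 1) * x)))"
    by (simp add: term_eq f sum.distrib sum_distrib_left)
  then show ?thesis
    using sum_sgn[of "\<lambda>x. f x + Qfun n x"] by simp
qed

lemma nega_W:
  assumes f: "\<forall>x. F2 (f x)"
  shows "negabent n alpha f \<longleftrightarrow>
    (\<forall>v. (W (\<lambda>x. f x + Qfun n x) v)^2 + (W (\<lambda>x. f x + Qfun n x) (v + 1))^2 = 2^(n+1))"
proof -
  let ?W = "W (\<lambda>x. f x + Qfun n x)"
  have e: "cmod (\<Sum>x\<in>UNIV. sgn2 (f x + tr n (u * x)) * \<i> ^ wt alpha n x) = sqrt (2^n)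
      \<longleftrightarrow> (?W (u + lam))^2 + (?W (u + lam + 1))^2 = 2^(n+1)" for u
  proof -
    define a where "a = real_of_int (?W (u + lam))"
    define b where "b = real_of_int (?W (u + lam + 1))"
    have "cmod (\<Sum>x\<in>UNIV. sgn2 (f x + tr n (u * x)) * \<i> ^ wt alpha n x) = sqrt (2^n)
       \<longleftrightarrow> (a^2+b^2)/2 = 2^n"
    proof -
      have "cmod ((1+\<i>)/2 * of_real a + (1-\<i>)/2 * of_real b) = sqrt (2^n) \<longleftrightarrow>
         (cmod ((1+\<i>)/2 * of_real a + (1-\<i>)/2 * of_real b))^2 = 2^n"
        by (rule sqrt_iff) simp_all
      then show ?thesis unfolding nega_sum[OF f] a_def[symmetric] b_def[symmetric] cmod_comb .
    qed
    also have "\<dots> \<longleftrightarrow> a^2 + b^2 = 2^(n+1)"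
    proof -
      have "(2::real)^(n+1) = 2 * 2^n" by simp
      then show ?thesis by (auto simp: field_simps)
    qed
    also have "\<dots> \<longleftrightarrow> (?W (u + lam))^2 + (?W (u + lam + 1))^2 = 2^(n+1)"
    proof -
      have r: "real_of_int ((?W (u + lam))^2 + (?W (u + lam + 1))^2) = a^2 + b^2" by (simp add: a_def b_def)
      have r2: "real_of_int (2^(n+1)) = 2^(n+1)" by simp
      show ?thesis unfolding r[symmetric] r2[symmetric] of_int_eq_iff ..
    qed
    finally show ?thesis .
  qed
  have "negabent n alpha f \<longleftrightarrow> (\<forall>u. (?W (u + lam))^2 + (?W (u + lam + 1))^2 = 2^(n+1))"
    unfolding negabent_def e by simp
  also have "\<dots> \<longleftrightarrow> (\<forall>v. (?W v)^2 + (?W (v + 1))^2 = 2^(n+1))"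
  proof
    assume h: "\<forall>u. (?W (u + lam))^2 + (?W (u + lam + 1))^2 = 2^(n+1)"
    show "\<forall>v. (?W v)^2 + (?W (v + 1))^2 = 2^(n+1)"
    proof
      fix v
      have vv: "v + lam + lam = v" by (simp add: add.assoc)
      have "(?W (v+lam+lam))^2 + (?W (v+lam+lam+1))^2 = 2^(n+1)" using h by blast
      then show "(?W v)^2 + (?W (v + 1))^2 = 2^(n+1)" unfolding vv .
    qed
  qed auto
  finally show ?thesis .
qed

lemma main:
  assumes f: "\<forall>x. F2 (f x)"
  shows "negabent n alpha f \<longleftrightarrow> bent n (\<lambda>x. f x + Qfun n x)"
proof -
  let ?W = "W (\<lambda>x. f x + Qfun n x)"
  have "(\<forall>v. (?W v)^2 + (?W (v + 1))^2 = 2^(n+1)) \<longleftrightarrow> (\<forall>v. (?W v)^2 = 2^n)"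
  proof
    assume h: "\<forall>v. (?W v)^2 + (?W (v + 1))^2 = 2^(n+1)"
    show "\<forall>v. (?W v)^2 = 2^n"
    proof
      fix v
      have "(?W v)^2 + (?W (v + 1))^2 = 2^(2*m+1)" using h nmm by (metis mult_2)
      then have "(?W v)^2 = 2^(2*m)" by (rule two_sq)
      then show "(?W v)^2 = 2^n" using nmm by (metis mult_2)
    qed
  qed simp
  then show ?thesis using nega_W[OF f] bent_W by simp
qed

end

theorem corollary1:
  fixes n :: nat and alpha :: "nat \<Rightarrow> 'a::{field,finite}" and f :: "'a \<Rightarrow> 'a"
  assumes "even n" and "n \<ge> 2"
    and "card (UNIV :: 'a set) = 2 ^ n" and "(2::'a) = 0"
    and "self_dual_basis n alpha"
    and "\<forall>x. f x = 0 \<or> f x = 1"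
  shows "bent_negabent n alpha f \<longleftrightarrow> (bent n f \<and> bent n (\<lambda>x. f x + Qfun n x))"
proof -
  interpret L n alpha
    using assms by unfold_locales auto
  have "\<forall>x. F2 (f x)" using assms(6) by (simp add: F2_def)
  then show ?thesis unfolding bent_negabent_def using main by blast
qed

end
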